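(* Let $\Delta>1$, $D\le n$, integers $e_0,e_1\ge0$, and let $M\in\mathbb{F}_2^{m\times n}$ satisfy: for all $S_1,S_2\subseteq[n]$ with $|S_2|\le|S_1|\le D$, if $|S_1|/|S_2|>\Delta^2$ then $(M\odot\mathbf{v}(S_1),M\odot\mathbf{v}(S_2))$ are $(e_0+e_1,e_0+e_1)$-far. Let $G=(V,\mathcal{E})$ be the undirected graph with $V=\{A\subseteq[n]:|A|\le D\}$ and $(A,B)\in\mathcal{E}$ iff $(M\odot\mathbf{v}(A),M\odot\mathbf{v}(B))$ are $(e_0+e_1,e_0+e_1)$-close. Then for $A,B\in V$: (i) if $(A,B)\in\mathcal{E}$ and $|A\cup B|\le D$, then $(A\cup B,A)\in\mathcal{E}$ and $(A\cup B,B)\in\mathcal{E}$; (ii) if $\frac{|A|}{|B|}\notin\left[\frac{1}{\Delta^2},\Delta^2\right]$, then $(A,B)\notin\mathcal{E}$.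
   Context: Group testing model: $(M\odot\mathbf{x})_i=\bigvee_{j:M_{ij}=1}\mathbf{x}_j$. $[n]=\{1,\dots,n\}$; for $S\subseteq[n]$, $\mathbf{v}(S)$ is the binary vector with support $S$. For $\mathbf{x},\mathbf{y}\in\mathbb{F}_2^m$, $(\mathbf{x},\mathbf{y})$ is $(a,b)$-far iff $|\mathrm{supp}(\mathbf{y})\setminus\mathrm{supp}(\mathbf{x})|>a$ or $|\mathrm{supp}(\mathbf{x})\setminus\mathrm{supp}(\mathbf{y})|>b$, and $(a,b)$-close otherwise. *)

theory Defs
  imports Complex_Main
begin

text \<open>Binary vectors in F_2^k are modelled as predicates on the index set {1..k};
  a binary m x n matrix M is a predicate on (row, column) with rows in {1..m},
  columns in {1..n}.\<close>

definition vecS :: "nat set \<Rightarrow> nat \<Rightarrow> bool" where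
  "vecS S = (\<lambda>j. j \<in> S)"

definition gt_mult :: "nat \<Rightarrow> (nat \<Rightarrow> nat \<Rightarrow> bool) \<Rightarrow> (nat \<Rightarrow> bool) \<Rightarrow> nat \<Rightarrow> bool" where
  "gt_mult n M x = (\<lambda>i. \<exists>j\<in>{1..n}. M i j \<and> x j)"

definition supp :: "nat \<Rightarrow> (nat \<Rightarrow> bool) \<Rightarrow> nat set" where
  "supp m x = {i \<in> {1..m}. x i}"

definition far :: "nat \<Rightarrow> nat \<Rightarrow> nat \<Rightarrow> (nat \<Rightarrow> bool) \<Rightarrow> (nat \<Rightarrow> bool) \<Rightarrow> bool" where
  "far m a b x y \<longleftrightarrow> card (supp m y - supp m x) > a \<or> card (supp m x - supp m y) > b"

definition close :: "nat \<Rightarrow> nat \<Rightarrow> nat \<Rightarrow> (nat \<Rightarrow> bool) \<Rightarrow> (nat \<Rightarrow> bool) \<Rightarrow> bool" where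
  "close m a b x y \<longleftrightarrow> \<not> far m a b x y"

definition Vset :: "nat \<Rightarrow> nat \<Rightarrow> nat set set" where
  "Vset n D = {A. A \<subseteq> {1..n} \<and> card A \<le> D}"

definition edge :: "nat \<Rightarrow> nat \<Rightarrow> (nat \<Rightarrow> nat \<Rightarrow> bool) \<Rightarrow> nat \<Rightarrow> nat \<Rightarrow> nat \<Rightarrow> nat set \<Rightarrow> nat set \<Rightarrow> bool" where
  "edge m n M D e0 e1 A B \<longleftrightarrow> A \<in> Vset n D \<and> B \<in> Vset n D \<and>
     close m (e0 + e1) (e0 + e1) (gt_mult n M (vecS A)) (gt_mult n M (vecS B))"

end

theory Submission
  imports Defs
begin

lemma supp_un: "supp m (gt_mult n M (vecS (A \<union> B))) = supp m (gt_mult n M (vecS A)) \<union> supp m (gt_mult n M (vecS B))"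
  unfolding supp_def gt_mult_def vecS_def by auto

lemma far_sym: "far m a a x y = far m a a y x"
  unfolding far_def by auto

theorem lemma2:
  fixes \<Delta> :: real and D n m e0 e1 :: nat and M :: "nat \<Rightarrow> nat \<Rightarrow> bool"
  assumes "\<Delta> > 1" and "D \<le> n"
    and hyp: "\<And>S1 S2. S1 \<subseteq> {1..n} \<Longrightarrow> S2 \<subseteq> {1..n} \<Longrightarrow> card S2 \<le> card S1 \<Longrightarrow> card S1 \<le> D \<Longrightarrow>
        real (card S1) > \<Delta>\<^sup>2 * real (card S2) \<Longrightarrow>
        far m (e0 + e1) (e0 + e1) (gt_mult n M (vecS S1)) (gt_mult n M (vecS S2))"
    and "A \<in> Vset n D" and "B \<in> Vset n D"
  shows "(edge m n M D e0 e1 A B \<and> card (A \<union> B) \<le> D \<longrightarrow>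
            edge m n M D e0 e1 (A \<union> B) A \<and> edge m n M D e0 e1 (A \<union> B) B)
       \<and> (real (card A) > \<Delta>\<^sup>2 * real (card B) \<or> real (card B) > \<Delta>\<^sup>2 * real (card A) \<longrightarrow>
            \<not> edge m n M D e0 e1 A B)"
proof
  have d1: "\<Delta>\<^sup>2 > 1" using assms(1) by (simp add: one_less_power)
  show "edge m n M D e0 e1 A B \<and> card (A \<union> B) \<le> D \<longrightarrow>
            edge m n M D e0 e1 (A \<union> B) A \<and> edge m n M D e0 e1 (A \<union> B) B"
  proof
    assume h: "edge m n M D e0 e1 A B \<and> card (A \<union> B) \<le> D"
    let ?a = "supp m (gt_mult n M (vecS A))" and ?b = "supp m (gt_mult n M (vecS B))"
    have V: "A \<union> B \<in> Vset n D" using h assms(4,5) unfolding Vset_def by auto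
    have c: "card (?b - ?a) \<le> e0 + e1" "card (?a - ?b) \<le> e0 + e1"
      using h unfolding edge_def close_def far_def by auto
    have e1: "(?a \<union> ?b) - ?a = ?b - ?a" "(?a \<union> ?b) - ?b = ?a - ?b" "?a - (?a \<union> ?b) = {}" "?b - (?a \<union> ?b) = {}" by auto
    show "edge m n M D e0 e1 (A \<union> B) A \<and> edge m n M D e0 e1 (A \<union> B) B"
      unfolding edge_def close_def far_def supp_un using V assms(4,5) c by (simp only: e1 card.empty) simp
  qed
  show "real (card A) > \<Delta>\<^sup>2 * real (card B) \<or> real (card B) > \<Delta>\<^sup>2 * real (card A) \<longrightarrow>
            \<not> edge m n M D e0 e1 A B"
  proof
    assume h: "real (card A) > \<Delta>\<^sup>2 * real (card B) \<or> real (card B) > \<Delta>\<^sup>2 * real (card A)"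
    have AV: "A \<subseteq> {1..n}" "card A \<le> D" and BV: "B \<subseteq> {1..n}" "card B \<le> D"
      using assms(4,5) unfolding Vset_def by auto
    have "far m (e0 + e1) (e0 + e1) (gt_mult n M (vecS A)) (gt_mult n M (vecS B))"
      using h
    proof
      assume h1: "real (card A) > \<Delta>\<^sup>2 * real (card B)"
      have "real (card B) \<le> \<Delta>\<^sup>2 * real (card B)" using d1 by (simp add: mult_le_cancel_right1)
      hence "card B \<le> card A" using h1 by linarith
      thus ?thesis using hyp[OF AV(1) BV(1) _ AV(2) h1] by simp
    next
      assume h1: "real (card B) > \<Delta>\<^sup>2 * real (card A)"
      have "real (card A) \<le> \<Delta>\<^sup>2 * real (card A)" using d1 by (simp add: mult_le_cancel_right1)
      hence "card A \<le> card B" using h1 by linarith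
      thus ?thesis using hyp[OF BV(1) AV(1) _ BV(2) h1] far_sym by metis
    qed
    thus "\<not> edge m n M D e0 e1 A B" unfolding edge_def close_def by simp
  qed
qed

end
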